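(* Let $f\in{\rm elh}(\mathbb{C})$ be non-polynomial and $g\in{\rm elh}(\mathbb{C})$, suppose there is $h_1\in{\rm elh}(\mathbb{C})$ with $h_1\neq g$ and $f\circ h_1=f\circ g$, and let $t(z),h(z),L(w)$ be entire functions with $f(g(z)+we^{t(z)})=f(g(z))+e^{L(w)+h(z)}\sin\pi w$ for all $(z,w)\in\mathbb{C}^2$. Then: (a) $L'(w)\sin\pi w+\pi\cos\pi w$ never vanishes; (b) the function $-h'(z)f(g(z)+we^{t(z)})+(g'(z)+wt'(z)e^{t(z)})f'(g(z)+we^{t(z)})$ is independent of $w$.
   Context: ${\rm elh}(\mathbb{C})$ denotes the set of entire functions with nowhere vanishing derivative and derivative $1$ at $0$. *)

theory Defs
  imports "HOL-Complex_Analysis.Complex_Analysis" "HOL-Computational_Algebra.Polynomial"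
begin

definition elh :: "(complex \<Rightarrow> complex) set" where
  "elh = {f. f holomorphic_on UNIV \<and> (\<forall>z. deriv f z \<noteq> 0) \<and> deriv f 0 = 1}"

definition is_polynomial_fun :: "(complex \<Rightarrow> complex) \<Rightarrow> bool" where
  "is_polynomial_fun f \<longleftrightarrow> (\<exists>p. \<forall>z. f z = poly p z)"

end

theory Submission
  imports Defs
begin

lemma hderiv: "f holomorphic_on UNIV \<Longrightarrow> (f has_field_derivative deriv f x) (at x)"
  by (meson DERIV_deriv_iff_field_differentiable UNIV_I holomorphic_on_imp_differentiable_at open_UNIV)

theorem proposition3p30:
  fixes f g h1 t h L :: "complex \<Rightarrow> complex"
  assumes "f \<in> elh" and "\<not> is_polynomial_fun f" and "g \<in> elh"
    and "h1 \<in> elh" and "h1 \<noteq> g" and "f \<circ> h1 = f \<circ> g"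
    and "t holomorphic_on UNIV" and "h holomorphic_on UNIV" and "L holomorphic_on UNIV"
    and "\<forall>z w. f (g z + w * exp (t z)) = f (g z) + exp (L w + h z) * sin (of_real pi * w)"
  shows "(\<forall>w. deriv L w * sin (of_real pi * w) + of_real pi * cos (of_real pi * w) \<noteq> 0)
    \<and> (\<exists>c. \<forall>z w. - deriv h z * f (g z + w * exp (t z))
                 + (deriv g z + w * deriv t z * exp (t z)) * deriv f (g z + w * exp (t z)) = c z)"
proof -
  have fh: "f holomorphic_on UNIV" and fd: "\<And>z. deriv f z \<noteq> 0" using assms(1) by (auto simp: elh_def)
  have gh: "g holomorphic_on UNIV" using assms(3) by (auto simp: elh_def)
  note dF = hderiv[OF fh] and dG = hderiv[OF gh] and dT = hderiv[OF assms(7)]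
    and dH = hderiv[OF assms(8)] and dL = hderiv[OF assms(9)]
  note eq = assms(10)
  have A: "deriv L w * sin (of_real pi * w) + of_real pi * cos (of_real pi * w) \<noteq> 0" for w
  proof -
    have d1: "((\<lambda>v. f (g 0 + v * exp (t 0))) has_field_derivative deriv f (g 0 + w * exp (t 0)) * exp (t 0)) (at w)"
      by (rule DERIV_chain'[where f="\<lambda>v. g 0 + v * exp (t 0)" and g=f, OF _ dF, simplified])
         (auto intro!: derivative_eq_intros)
    have d2: "((\<lambda>v. f (g 0) + exp (L v + h 0) * sin (of_real pi * v)) has_field_derivative
       exp (L w + h 0) * (deriv L w * sin (of_real pi * w) + of_real pi * cos (of_real pi * w))) (at w)"
      by (auto intro!: derivative_eq_intros dL simp: algebra_simps)
    have "(\<lambda>v. f (g 0 + v * exp (t 0))) = (\<lambda>v. f (g 0) + exp (L v + h 0) * sin (of_real pi * v))"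
      using eq by auto
    with d1 d2 have "deriv f (g 0 + w * exp (t 0)) * exp (t 0) =
       exp (L w + h 0) * (deriv L w * sin (of_real pi * w) + of_real pi * cos (of_real pi * w))"
      using DERIV_unique by metis
    then show ?thesis using fd by auto
  qed
  have B: "- deriv h z * f (g z + w * exp (t z))
                 + (deriv g z + w * deriv t z * exp (t z)) * deriv f (g z + w * exp (t z))
         = deriv f (g z) * deriv g z - deriv h z * f (g z)" for z w
  proof -
    have d1: "((\<lambda>z. f (g z + w * exp (t z))) has_field_derivative deriv f (g z + w * exp (t z)) * (deriv g z + w * (exp (t z) * deriv t z))) (at z)"
      by (rule DERIV_chain'[where f="\<lambda>z. g z + w * exp (t z)" and g=f, OF _ dF])
         (auto intro!: derivative_eq_intros dG dT)
    have d2: "((\<lambda>z. f (g z) + exp (L w + h z) * sin (of_real pi * w)) has_field_derivative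
       deriv f (g z) * deriv g z + exp (L w + h z) * deriv h z * sin (of_real pi * w)) (at z)"
      by (auto intro!: derivative_eq_intros dH DERIV_chain'[where f=g and g=f, OF dG dF] simp: algebra_simps)
    have "(\<lambda>z. f (g z + w * exp (t z))) = (\<lambda>z. f (g z) + exp (L w + h z) * sin (of_real pi * w))"
      using eq by auto
    with d1 d2 have e: "deriv f (g z + w * exp (t z)) * (deriv g z + w * (exp (t z) * deriv t z)) =
       deriv f (g z) * deriv g z + exp (L w + h z) * deriv h z * sin (of_real pi * w)"
      using DERIV_unique by metis
    have e2: "exp (L w + h z) * sin (of_real pi * w) = f (g z + w * exp (t z)) - f (g z)"
      using eq by simp
    have "exp (L w + h z) * deriv h z * sin (of_real pi * w) = deriv h z * (f (g z + w * exp (t z)) - f (g z))"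
      using e2 by (metis mult.commute mult.left_commute)
    with e show ?thesis by (simp add: algebra_simps)
  qed
  show ?thesis
    using A B by (intro conjI allI exI[of _ "\<lambda>z. deriv f (g z) * deriv g z - deriv h z * f (g z)"]) auto
qed

end
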